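(* Let $H$ be a strong symplectic Hilbert space with signature $(\infty,\infty)$ and let $W\subseteq H$ be a maximal positive-definite subspace which is not maximally completely positive-definite. Then $W\cap W^{\perp_s}=0$, and $W\oplus W^{\perp_s}$ is a proper dense subspace of $H$.
   Context: All Hilbert spaces are complex and separable. A strong symplectic structure on a Hilbert space $H$ is a continuous sesquilinear form $[\cdot,\cdot]$ (linear in the first, conjugate-linear in the second variable) with $[y,x]=-\overline{[x,y]}$, non-degenerate, and such that $x\mapsto[\cdot,x]$ maps $H$ onto its dual. For $L\subseteq H$, $L^{\perp_s}=\{x:[x,y]=0\ \forall y\in L\}$. A closed subspace $L\subseteq H$ is maximal positive-definite if $-i[x,x]>0$ for every $0\ne x\in L$ and $L$ is not properly contained in a subspace with the same property; it is maximally completely positive-definite if moreover there is $c_L>0$ with $-i[x,x]\ge c_L\|x\|^2$ for all $x\in L$. If $L$ is maximally completely positive-definite then $H=L\oplus L^{\perp_s}$ and $(n_+,n_-)=(\dim L,\dim L^{\perp_s})$ is independent of $L$; this is the signature of $H$. *)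

theory Defs
  imports "HOL-Analysis.Analysis"
begin

text \<open>A complex separable Hilbert space is modelled as a real Hilbert space
(type of class real_inner + complete_space + second_countable_topology) together
with an orthogonal complex structure J (multiplication by i).
Complex scalar multiplication is (a + i b) x = a x + b (J x); the complex inner
product is x \<bullet> y + i (x \<bullet> J y), whose norm is the given norm.\<close>

definition complex_structure :: "('a::real_inner \<Rightarrow> 'a) \<Rightarrow> bool" where
  "complex_structure J \<longleftrightarrow> linear J \<and> (\<forall>x. J (J x) = - x) \<and> (\<forall>x y. J x \<bullet> J y = x \<bullet> y)"

definition csubspace :: "('a::real_inner \<Rightarrow> 'a) \<Rightarrow> 'a set \<Rightarrow> bool" where
  "csubspace J L \<longleftrightarrow> subspace L \<and> J ` L \<subseteq> L"

definition cdual :: "('a::real_normed_vector \<Rightarrow> 'a) \<Rightarrow> ('a \<Rightarrow> complex) \<Rightarrow> bool" where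
  "cdual J f \<longleftrightarrow> bounded_linear f \<and> (\<forall>x. f (J x) = \<i> * f x)"

definition strong_symplectic :: "('a::real_inner \<Rightarrow> 'a) \<Rightarrow> ('a \<Rightarrow> 'a \<Rightarrow> complex) \<Rightarrow> bool" where
  "strong_symplectic J \<omega> \<longleftrightarrow>
     bounded_bilinear \<omega>
   \<and> (\<forall>x y. \<omega> (J x) y = \<i> * \<omega> x y)
   \<and> (\<forall>x y. \<omega> x (J y) = - \<i> * \<omega> x y)
   \<and> (\<forall>x y. \<omega> y x = - cnj (\<omega> x y))
   \<and> (\<forall>x. (\<forall>y. \<omega> x y = 0) \<longrightarrow> x = 0)
   \<and> (\<forall>f. cdual J f \<longrightarrow> (\<exists>x. f = (\<lambda>y. \<omega> y x)))"

definition sperp :: "('a \<Rightarrow> 'a \<Rightarrow> complex) \<Rightarrow> 'a set \<Rightarrow> 'a set" where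
  "sperp \<omega> L = {x. \<forall>y\<in>L. \<omega> x y = 0}"

text \<open>positive-definite: -i[x,x] > 0 for nonzero x (note -i[x,x] is real by skewness)\<close>
definition pos_def :: "('a::real_vector \<Rightarrow> 'a \<Rightarrow> complex) \<Rightarrow> 'a set \<Rightarrow> bool" where
  "pos_def \<omega> L \<longleftrightarrow> (\<forall>x\<in>L. x \<noteq> 0 \<longrightarrow> - \<i> * \<omega> x x \<in> \<real> \<and> Re (- \<i> * \<omega> x x) > 0)"

definition max_pos_def :: "('a::real_inner \<Rightarrow> 'a) \<Rightarrow> ('a \<Rightarrow> 'a \<Rightarrow> complex) \<Rightarrow> 'a set \<Rightarrow> bool" where
  "max_pos_def J \<omega> L \<longleftrightarrow> csubspace J L \<and> closed L \<and> pos_def \<omega> L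
     \<and> \<not> (\<exists>M. csubspace J M \<and> closed M \<and> pos_def \<omega> M \<and> L \<subset> M)"

definition max_cpos_def :: "('a::real_inner \<Rightarrow> 'a) \<Rightarrow> ('a \<Rightarrow> 'a \<Rightarrow> complex) \<Rightarrow> 'a set \<Rightarrow> bool" where
  "max_cpos_def J \<omega> L \<longleftrightarrow> max_pos_def J \<omega> L
     \<and> (\<exists>c>0. \<forall>x\<in>L. Re (- \<i> * \<omega> x x) \<ge> c * (norm x)\<^sup>2)"

text \<open>infinite-dimensional (real and complex infinite dimensionality coincide)\<close>
definition inf_dim :: "'a::real_vector set \<Rightarrow> bool" where
  "inf_dim L \<longleftrightarrow> (\<exists>B\<subseteq>L. independent B \<and> infinite B)"

text \<open>signature (\<infinity>,\<infinity>): some (equivalently every) maximally completely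
positive-definite L has dim L = dim L^perp_s = \<infinity>\<close>
definition signature_inf_inf :: "('a::real_inner \<Rightarrow> 'a) \<Rightarrow> ('a \<Rightarrow> 'a \<Rightarrow> complex) \<Rightarrow> bool" where
  "signature_inf_inf J \<omega> \<longleftrightarrow>
     (\<exists>L. max_cpos_def J \<omega> L \<and> inf_dim L \<and> inf_dim (sperp \<omega> L))"

end

theory Submission
  imports Defs
begin

lemma ubp:
  fixes f :: "'i \<Rightarrow> 'a::{real_normed_vector,complete_space} \<Rightarrow> 'b::real_normed_vector"
  assumes lin: "\<And>i. bounded_linear (f i)"
    and pw: "\<And>x. \<exists>B. \<forall>i. norm (f i x) \<le> B"
  shows "\<exists>M. \<forall>i x. norm (f i x) \<le> M * norm x"
proof -
  define E where "E k = {x. \<forall>i. norm (f i x) \<le> real k}" for k :: nat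
  have clE: "closed (E k)" for k
  proof -
    have "E k = (\<Inter>i. {x. norm (f i x) \<le> real k})" by (auto simp: E_def)
    moreover have "closed {x. norm (f i x) \<le> real k}" for i
      by (intro closed_Collect_le continuous_intros linear_continuous_on lin) 
    ultimately show ?thesis by auto
  qed
  have UE: "\<Union>(range E) = UNIV"
  proof safe
    fix x
    obtain B where "\<forall>i. norm (f i x) \<le> B" using pw by blast
    moreover obtain k :: nat where "B \<le> real k" using real_arch_simple by blast
    ultimately have "x \<in> E k" unfolding E_def by (auto intro: order_trans)
    then show "x \<in> \<Union>(range E)" by blast
  qed simp
  have "\<exists>k. interior (E k) \<noteq> {}"
  proof (rule ccontr)
    assume "\<not> ?thesis"
    then have "euclidean interior_of \<Union>(range E) = {}"
      by (intro Baire_category_alt) (auto simp: completely_metrizable_space_euclidean clE)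
    then show False using UE by simp
  qed
  then obtain k x0 where "x0 \<in> interior (E k)" by blast
  then obtain r where r: "r > 0" "ball x0 r \<subseteq> E k" by (meson open_contains_ball open_interior interior_subset subset_trans)
  have "norm (f i x) \<le> (4 * real k / r) * norm x" for i x
  proof (cases "x = 0")
    case True then show ?thesis using linear_0[OF bounded_linear.linear[OF lin]] by simp
  next
    case False
    interpret L: bounded_linear "f i" by (rule lin)
    define c where "c = r / (2 * norm x)"
    have c: "c > 0" using r False by (simp add: c_def)
    have "norm (c *\<^sub>R x) < r" using r False by (simp add: c_def)
    then have "x0 + c *\<^sub>R x \<in> E k" "x0 \<in> E k" using r by (auto simp: dist_norm)
    then have a: "norm (f i (x0 + c *\<^sub>R x)) \<le> k" "norm (f i x0) \<le> k" by (auto simp: E_def)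
    have "f i (c *\<^sub>R x) = f i (x0 + c *\<^sub>R x) - f i x0"
      by (simp add: L.add)
    then have "norm (f i (c *\<^sub>R x)) \<le> 2 * k"
      using a norm_triangle_ineq4[of "f i (x0 + c *\<^sub>R x)" "f i x0"] by simp
    then have "c * norm (f i x) \<le> 2 * k" using c by (simp add: L.scaleR)
    then have "norm (f i x) \<le> 2 * k / c" using c by (simp add: field_simps)
    also have "2 * k / c = (4 * real k / r) * norm x" using r False by (simp add: c_def field_simps)
    finally show ?thesis .
  qed
  then show ?thesis by blast
qed

lemma orth_exists:
  fixes M :: "'a::{real_inner,complete_space} set"
  assumes sub: "subspace M" and cl: "closed M" and zM: "z \<notin> M"
  shows "\<exists>y. y \<noteq> 0 \<and> (\<forall>m\<in>M. m \<bullet> y = 0) \<and> z \<bullet> y \<noteq> 0"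
proof -
  have Mne: "M \<noteq> {}" using sub subspace_0 by blast
  define d where "d = infdist z M"
  have d0: "d \<ge> 0" by (simp add: d_def infdist_nonneg)
  have dle: "d \<le> dist z m" if "m \<in> M" for m using that by (simp add: d_def infdist_le)
  have "\<exists>m\<in>M. dist z m < d + 1 / (Suc n)" for n :: nat
  proof -
    have "infdist z M < d + 1 / Suc n" by (simp add: d_def)
    then show ?thesis unfolding infdist_notempty[OF Mne]
      by (subst (asm) cINF_less_iff) (use Mne in \<open>auto intro: bdd_belowI[where m=0]\<close>)
  qed
  then obtain m where mM: "\<And>n. m n \<in> M" and md: "\<And>n. dist z (m n) < d + 1 / Suc n"
    by metis
  have key: "(dist (m n) (m k))\<^sup>2 \<le> 4 * d * (1 / Suc n + 1 / Suc k) + 2 * (1 / Suc n)\<^sup>2 + 2 * (1 / Suc k)\<^sup>2" for n k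
  proof -
    define a where "a = z - m n"
    define b where "b = z - m k"
    have para: "(norm (a - b))\<^sup>2 = 2 * (norm a)\<^sup>2 + 2 * (norm b)\<^sup>2 - (norm (a + b))\<^sup>2"
      by (simp add: power2_norm_eq_inner inner_diff_left inner_diff_right inner_add_left inner_add_right inner_commute)
    have "a + b = 2 *\<^sub>R (z - (1/2) *\<^sub>R (m n + m k))" by (simp add: a_def b_def algebra_simps scaleR_2)
    moreover have "(1/2) *\<^sub>R (m n + m k) \<in> M" using sub mM by (intro subspace_scale subspace_add) auto
    ultimately have "norm (a + b) \<ge> 2 * d" using dle by (auto simp: dist_norm)
    then have "(2 * d)\<^sup>2 \<le> (norm (a + b))\<^sup>2" using d0 by (intro power_mono) auto
    then have ab: "(norm (a + b))\<^sup>2 \<ge> 4 * d\<^sup>2" by (simp add: power_mult_distrib)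
    have na: "norm a \<le> d + 1 / Suc n" and nb: "norm b \<le> d + 1 / Suc k"
      using md[of n] md[of k] by (auto simp: a_def b_def dist_norm)
    have "(norm a)\<^sup>2 \<le> (d + 1 / Suc n)\<^sup>2" using na by (intro power_mono) auto
    moreover have "(norm b)\<^sup>2 \<le> (d + 1 / Suc k)\<^sup>2" using nb by (intro power_mono) auto
    ultimately have "(norm (a - b))\<^sup>2 \<le> 2 * (d + 1 / Suc n)\<^sup>2 + 2 * (d + 1 / Suc k)\<^sup>2 - 4 * d\<^sup>2"
      using para ab by linarith
    also have "\<dots> = 4 * d * (1 / Suc n + 1 / Suc k) + 2 * (1 / Suc n)\<^sup>2 + 2 * (1 / Suc k)\<^sup>2"
      by (simp add: power2_sum algebra_simps)
    finally show ?thesis by (simp add: a_def b_def dist_norm norm_minus_commute)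
  qed
  have "Cauchy m"
  proof (rule metric_CauchyI)
    fix e :: real assume e: "e > 0"
    obtain N :: nat where N: "(8 * d + 4) / Suc N < e\<^sup>2"
    proof -
      obtain N :: nat where "(8 * d + 4) / e\<^sup>2 < Suc N" using reals_Archimedean2 by (metis of_nat_Suc add.commute less_add_one order.strict_trans)
      then have "(8 * d + 4) / Suc N < e\<^sup>2" using e by (simp add: field_simps)
      then show ?thesis using that by blast
    qed
    show "\<exists>N. \<forall>p\<ge>N. \<forall>q\<ge>N. dist (m p) (m q) < e"
    proof (intro exI allI impI)
      fix p q assume pq: "N \<le> p" "N \<le> q"
      have ip: "1 / real (Suc p) \<le> 1 / Suc N" and iq: "1 / real (Suc q) \<le> 1 / Suc N"
        using pq by (auto simp: frac_le)
      have ip1: "1 / real (Suc p) \<le> 1" and iq1: "1 / real (Suc q) \<le> 1" by auto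
      have "(1 / real (Suc p))\<^sup>2 \<le> 1 / Suc N"
        proof -
        have "(1 / real (Suc p)) * (1 / real (Suc p)) \<le> 1 / real (Suc p)" by (rule mult_left_le) (use ip1 in auto)
        then have "(1 / real (Suc p))\<^sup>2 \<le> 1 / real (Suc p)" by (simp only: power2_eq_square)
        then show ?thesis using ip by linarith
      qed
      moreover have "(1 / real (Suc q))\<^sup>2 \<le> 1 / Suc N"
        proof -
        have "(1 / real (Suc q)) * (1 / real (Suc q)) \<le> 1 / real (Suc q)" by (rule mult_left_le) (use iq1 in auto)
        then have "(1 / real (Suc q))\<^sup>2 \<le> 1 / real (Suc q)" by (simp only: power2_eq_square)
        then show ?thesis using iq by linarith
      qed
      moreover have "4 * d * (1 / real (Suc p) + 1 / real (Suc q)) \<le> 4 * d * (2 / Suc N)"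
        by (rule mult_left_mono) (use ip iq d0 in auto)
      ultimately have "(dist (m p) (m q))\<^sup>2 \<le> 4 * d * (2 / Suc N) + 4 / Suc N"
        using key[of p q] by linarith
      also have "\<dots> = (8 * d + 4) / Suc N"
        using add_divide_distrib[of "8 * d" 4 "real (Suc N)"] by simp
      also have "\<dots> < e\<^sup>2" by (rule N)
      finally show "dist (m p) (m q) < e" using e by (simp add: power_less_imp_less_base)
    qed
  qed
  then obtain p where mp: "m \<longlonglongrightarrow> p" using complete_UNIV by (auto simp: complete_def)
  have pM: "p \<in> M" using cl mM mp closed_sequentially by blast
  have zp: "dist z p \<le> d"
  proof (rule field_le_epsilon)
    fix e :: real assume e: "e > 0"
    obtain n1 where n1: "\<forall>n\<ge>n1. dist (m n) p < e / 2" using mp e unfolding lim_sequentially by (meson half_gt_zero)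
    obtain n2 :: nat where n2: "1 / Suc n2 < e / 2"
      using e reals_Archimedean by (metis half_gt_zero of_nat_Suc inverse_eq_divide)
    define n where "n = max n1 n2"
    have "1 / real (Suc n) \<le> 1 / Suc n2" by (auto simp: n_def frac_le)
    then have "dist z (m n) < d + e / 2" using md[of n] n2 by linarith
    moreover have "dist (m n) p < e / 2" using n1 by (simp add: n_def)
    ultimately show "dist z p \<le> d + e" using dist_triangle[of z p "m n"] by linarith
  qed
  define y where "y = z - p"
  have y0: "y \<noteq> 0" using zM pM by (auto simp: y_def)
  have orth: "m \<bullet> y = 0" if mM': "m \<in> M" for m
  proof (rule ccontr)
    assume ne: "m \<bullet> y \<noteq> 0"
    then have m0: "m \<noteq> 0" by auto
    define t where "t = (m \<bullet> y) / (norm m)\<^sup>2"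
    have "p + t *\<^sub>R m \<in> M" using sub pM mM' by (intro subspace_add subspace_scale) auto
    then have "norm y \<le> norm (y - t *\<^sub>R m)" using dle zp by (fastforce simp: y_def dist_norm algebra_simps)
    then have "(norm y)\<^sup>2 \<le> (norm (y - t *\<^sub>R m))\<^sup>2" by (simp add: power_mono)
    also have "\<dots> = (norm y)\<^sup>2 - 2 * t * (m \<bullet> y) + t\<^sup>2 * (norm m)\<^sup>2"
      by (simp only: power2_norm_eq_inner) (simp add: inner_diff_left inner_diff_right inner_commute algebra_simps power2_eq_square)
    also have "\<dots> = (norm y)\<^sup>2 - (m \<bullet> y)\<^sup>2 / (norm m)\<^sup>2"
      using m0 by (simp add: t_def power2_eq_square field_simps)
    finally have "(m \<bullet> y)\<^sup>2 / (norm m)\<^sup>2 \<le> 0" by simp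
    moreover have "(m \<bullet> y)\<^sup>2 / (norm m)\<^sup>2 > 0" using ne m0 by simp
    ultimately show False by simp
  qed
  have "z \<bullet> y = y \<bullet> y + p \<bullet> y" by (simp add: y_def inner_diff_left)
  also have "\<dots> = y \<bullet> y" using orth pM by simp
  finally have "z \<bullet> y \<noteq> 0" using y0 by simp
  then show ?thesis using y0 orth by blast
qed

lemma cs_facts:
  assumes "complex_structure J"
  shows "linear J" "\<And>x. J (J x) = - x" "\<And>x y. J x \<bullet> J y = x \<bullet> y"
    "\<And>x. norm (J x) = norm x" "bounded_linear J" "\<And>x y. J x \<bullet> y = - (x \<bullet> J y)"
proof -
  show l: "linear J" and jj: "\<And>x. J (J x) = - x" and ip: "\<And>x y. J x \<bullet> J y = x \<bullet> y"
    using assms by (auto simp: complex_structure_def)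
  show n: "\<And>x. norm (J x) = norm x" using ip by (simp add: norm_eq_sqrt_inner)
  show "bounded_linear J" using l n by (intro bounded_linear_intro[where K=1]) (auto simp: linear_add linear_scale)
  show "J x \<bullet> y = - (x \<bullet> J y)" for x y
  proof -
    have "J x \<bullet> y = J (J x) \<bullet> J y" using ip by simp
    then show ?thesis using jj by simp
  qed
qed

definition cip :: "('a::real_inner \<Rightarrow> 'a) \<Rightarrow> 'a \<Rightarrow> 'a \<Rightarrow> complex" where
  "cip J y x = complex_of_real (x \<bullet> y) + \<i> * complex_of_real (x \<bullet> J y)"

lemma cip_cdual:
  assumes "complex_structure J"
  shows "cdual J (cip J y)"
proof -
  note cs = cs_facts[OF assms]
  have 1: "bounded_linear (\<lambda>x. complex_of_real (x \<bullet> y))"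
    by (rule bounded_linear_compose[OF bounded_linear_of_real bounded_linear_inner_left])
  have 2: "bounded_linear (\<lambda>x. \<i> * complex_of_real (x \<bullet> J y))"
    by (rule bounded_linear_compose[OF bounded_linear_mult_right], 
        rule bounded_linear_compose[OF bounded_linear_of_real bounded_linear_inner_left])
  have "bounded_linear (cip J y)" unfolding cip_def using bounded_linear_add[OF 1 2] by simp
  moreover have "cip J y (J x) = \<i> * cip J y x" for x
  proof -
    have a: "J x \<bullet> y = - (x \<bullet> J y)" by (rule cs(6))
    have b: "J x \<bullet> J y = x \<bullet> y" by (rule cs(3))
    show ?thesis unfolding cip_def a b by (simp add: complex_eq_iff)
  qed
  ultimately show ?thesis by (simp add: cdual_def)
qed

lemma separate:
  fixes J :: "'a::{real_inner, complete_space} \<Rightarrow> 'a"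
  assumes cs: "complex_structure J" and ss: "strong_symplectic J \<omega>"
    and M: "csubspace J M" "closed M" and zM: "z \<notin> M"
  shows "\<exists>a. (\<forall>m\<in>M. \<omega> m a = 0) \<and> \<omega> z a \<noteq> 0"
proof -
  note c = cs_facts[OF cs]
  obtain y where y: "y \<noteq> 0" "\<forall>m\<in>M. m \<bullet> y = 0" "z \<bullet> y \<noteq> 0"
    using orth_exists[of M z] M zM unfolding csubspace_def by blast
  have riesz: "\<forall>f. cdual J f \<longrightarrow> (\<exists>x. f = (\<lambda>y. \<omega> y x))"
    using ss unfolding strong_symplectic_def by blast
  obtain a where a: "cip J y = (\<lambda>x. \<omega> x a)"
    using riesz cip_cdual[OF cs, of y] by blast
  have "\<omega> m a = 0" if "m \<in> M" for m
  proof -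
    have "J m \<in> M" using M that by (auto simp: csubspace_def)
    then have "m \<bullet> J y = 0" using y c(6)[of m y] by simp
    then show ?thesis using y that fun_cong[OF a, of m] by (simp add: cip_def)
  qed
  moreover have "\<omega> z a \<noteq> 0" using y fun_cong[OF a, of z] by (auto simp: cip_def complex_eq_iff)
  ultimately show ?thesis by blast
qed

lemma closure_csubspace:
  assumes cs: "complex_structure J" and S: "csubspace J S"
  shows "csubspace J (closure S)"
proof -
  note c = cs_facts[OF cs]
  have sS: "subspace S" and JS: "\<And>x. x \<in> S \<Longrightarrow> J x \<in> S" using S unfolding csubspace_def by auto
  have z: "0 \<in> closure S" using sS subspace_0 closure_subset by blast
  have ad: "x + y \<in> closure S" if "x \<in> closure S" "y \<in> closure S" for x y
  proof -
    have "\<exists>f. (\<forall>n. f n \<in> S) \<and> f \<longlonglongrightarrow> x" using that(1) closure_sequential by blast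
    then obtain f where f: "\<forall>n. f n \<in> S" "f \<longlonglongrightarrow> x" by blast
    have "\<exists>g. (\<forall>n. g n \<in> S) \<and> g \<longlonglongrightarrow> y" using that(2) closure_sequential by blast
    then obtain g where g: "\<forall>n. g n \<in> S" "g \<longlonglongrightarrow> y" by blast
    have "\<forall>n. f n + g n \<in> S" using f g sS subspace_add by blast
    moreover have "(\<lambda>n. f n + g n) \<longlonglongrightarrow> x + y" using f g by (intro tendsto_add)
    ultimately show ?thesis by (intro closure_sequential[THEN iffD2] exI[of _ "(\<lambda>n. f n + g n)"] conjI)
  qed
  have sc: "r *\<^sub>R x \<in> closure S" if "x \<in> closure S" for x r
  proof -
    have "\<exists>f. (\<forall>n. f n \<in> S) \<and> f \<longlonglongrightarrow> x" using that(1) closure_sequential by blast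
    then obtain f where f: "\<forall>n. f n \<in> S" "f \<longlonglongrightarrow> x" by blast
    have "\<forall>n. r *\<^sub>R f n \<in> S" using f sS subspace_scale by blast
    moreover have "(\<lambda>n. r *\<^sub>R f n) \<longlonglongrightarrow> r *\<^sub>R x" using f by (intro tendsto_scaleR tendsto_const)
    ultimately show ?thesis by (intro closure_sequential[THEN iffD2] exI[of _ "(\<lambda>n. r *\<^sub>R f n)"] conjI)
  qed
  have jc: "J x \<in> closure S" if "x \<in> closure S" for x
  proof -
    have "\<exists>f. (\<forall>n. f n \<in> S) \<and> f \<longlonglongrightarrow> x" using that(1) closure_sequential by blast
    then obtain f where f: "\<forall>n. f n \<in> S" "f \<longlonglongrightarrow> x" by blast
    have "\<forall>n. J (f n) \<in> S" using f JS by blast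
    moreover have "(\<lambda>n. J (f n)) \<longlonglongrightarrow> J x" using f(2) by (rule bounded_linear.tendsto[OF c(5)])
    ultimately show ?thesis by (intro closure_sequential[THEN iffD2] exI[of _ "(\<lambda>n. J (f n))"] conjI)
  qed
  have "subspace (closure S)" unfolding subspace_def using z ad sc by blast
  then show ?thesis unfolding csubspace_def using jc by blast
qed

lemma cs_bound:
  fixes \<omega> :: "'a::real_normed_vector \<Rightarrow> 'a \<Rightarrow> complex"
  assumes bb: "bounded_bilinear \<omega>"
    and lJ: "\<And>x y. \<omega> (J x) y = \<i> * \<omega> x y"
    and rJ: "\<And>x y. \<omega> x (J y) = - \<i> * \<omega> x y"
    and sk: "\<And>x y. \<omega> y x = - cnj (\<omega> x y)"
    and P: "\<And>x. x \<in> W \<Longrightarrow> Im (\<omega> x x) \<ge> 0"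
    and sW: "subspace W" and JW: "\<And>x. x \<in> W \<Longrightarrow> J x \<in> W"
    and w: "w \<in> W" and u: "u \<in> W"
  shows "norm (\<omega> w u) \<le> Im (\<omega> w w) + Im (\<omega> u u)"
proof -
  interpret B: bounded_bilinear \<omega> by (rule bb)
  have ju: "J u \<in> W" using JW u .
  have e1: "\<omega> (w + u) (w + u) = \<omega> w w + \<omega> w u + \<omega> u w + \<omega> u u"
    by (simp add: B.add_left B.add_right)
  have e2: "\<omega> (w - u) (w - u) = \<omega> w w - \<omega> w u - \<omega> u w + \<omega> u u"
    by (simp add: B.diff_left B.diff_right)
  have e3: "\<omega> (w + J u) (w + J u) = \<omega> w w + \<omega> w (J u) + \<omega> (J u) w + \<omega> (J u) (J u)"
    by (simp add: B.add_left B.add_right)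
  have e4: "\<omega> (w - J u) (w - J u) = \<omega> w w - \<omega> w (J u) - \<omega> (J u) w + \<omega> (J u) (J u)"
    by (simp add: B.diff_left B.diff_right)
  have s1: "\<omega> u w = - cnj (\<omega> w u)" by (rule sk)
  have jj: "\<omega> (J u) (J u) = \<omega> u u" by (simp add: lJ rJ)
  have p1: "Im (\<omega> (w + u) (w + u)) \<ge> 0" using P sW w u subspace_add by blast
  have p2: "Im (\<omega> (w - u) (w - u)) \<ge> 0" using P sW w u subspace_diff by blast
  have p3: "Im (\<omega> (w + J u) (w + J u)) \<ge> 0" using P sW w ju subspace_add by blast
  have p4: "Im (\<omega> (w - J u) (w - J u)) \<ge> 0" using P sW w ju subspace_diff by blast
  have i1: "\<bar>Im (\<omega> w u)\<bar> \<le> (Im (\<omega> w w) + Im (\<omega> u u)) / 2"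
    using p1 p2 unfolding e1 e2 s1 by simp
  have i2: "\<bar>Re (\<omega> w u)\<bar> \<le> (Im (\<omega> w w) + Im (\<omega> u u)) / 2"
    using p3 p4 unfolding e3 e4 jj lJ rJ s1 by simp
  show ?thesis using cmod_le[of "\<omega> w u"] i1 i2 by (simp add: field_simps)
qed

theorem proposition2p13:
  fixes J :: "'a::{real_inner, complete_space, second_countable_topology} \<Rightarrow> 'a"
    and \<omega> :: "'a \<Rightarrow> 'a \<Rightarrow> complex"
    and W :: "'a set"
  assumes "complex_structure J"
    and "strong_symplectic J \<omega>"
    and "signature_inf_inf J \<omega>"
    and "max_pos_def J \<omega> W"
    and "\<not> max_cpos_def J \<omega> W"
  shows "W \<inter> sperp \<omega> W = {0}
    \<and> closure {w + v | w v. w \<in> W \<and> v \<in> sperp \<omega> W} = UNIV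
    \<and> {w + v | w v. w \<in> W \<and> v \<in> sperp \<omega> W} \<noteq> UNIV"
proof -
  note cs = assms(1)
  note c = cs_facts[OF cs]
  have ssu: "bounded_bilinear \<omega>
   \<and> (\<forall>x y. \<omega> (J x) y = \<i> * \<omega> x y)
   \<and> (\<forall>x y. \<omega> x (J y) = - \<i> * \<omega> x y)
   \<and> (\<forall>x y. \<omega> y x = - cnj (\<omega> x y))
   \<and> (\<forall>x. (\<forall>y. \<omega> x y = 0) \<longrightarrow> x = 0)
   \<and> (\<forall>f. cdual J f \<longrightarrow> (\<exists>x. f = (\<lambda>y. \<omega> y x)))"
    using assms(2) unfolding strong_symplectic_def .
  have bb: "bounded_bilinear \<omega>" using ssu by (elim conjE)
  have lJ0: "\<forall>x y. \<omega> (J x) y = \<i> * \<omega> x y" using ssu by (elim conjE)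
  have rJ0: "\<forall>x y. \<omega> x (J y) = - \<i> * \<omega> x y" using ssu by (elim conjE)
  have sk0: "\<forall>x y. \<omega> y x = - cnj (\<omega> x y)" using ssu by (elim conjE)
  have riesz: "\<forall>f. cdual J f \<longrightarrow> (\<exists>x. f = (\<lambda>y. \<omega> y x))" using ssu by (elim conjE)
  have lJ: "\<And>x y. \<omega> (J x) y = \<i> * \<omega> x y" using lJ0 by blast
  have rJ: "\<And>x y. \<omega> x (J y) = - \<i> * \<omega> x y" using rJ0 by blast
  have sk: "\<And>x y. \<omega> y x = - cnj (\<omega> x y)" using sk0 by blast
  interpret B: bounded_bilinear \<omega> by (rule bb)
  have mp: "csubspace J W \<and> closed W \<and> pos_def \<omega> W
     \<and> \<not> (\<exists>M. csubspace J M \<and> closed M \<and> pos_def \<omega> M \<and> W \<subset> M)"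
    using assms(4) unfolding max_pos_def_def .
  have Wc: "csubspace J W" using mp by (elim conjE)
  have Wcl: "closed W" using mp by (elim conjE)
  have Wp: "pos_def \<omega> W" using mp by (elim conjE)
  have notc: "\<not> (\<exists>c>0. \<forall>x\<in>W. Re (- \<i> * \<omega> x x) \<ge> c * (norm x)\<^sup>2)"
    using assms(4,5) unfolding max_cpos_def_def by blast
  have sW: "subspace W" and JW: "\<And>x. x \<in> W \<Longrightarrow> J x \<in> W" using Wc unfolding csubspace_def by auto
  have P: "Im (\<omega> x x) \<ge> 0" if "x \<in> W" for x
  proof (cases "x = 0")
    case True then show ?thesis by (simp add: B.zero_left)
  next
    case False then show ?thesis using Wp that unfolding pos_def_def by force
  qed
  have Ppos: "Im (\<omega> x x) > 0" if "x \<in> W" "x \<noteq> 0" for x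
    using Wp that unfolding pos_def_def by force
  define V where "V = sperp \<omega> W"
  have V_iff: "v \<in> V \<longleftrightarrow> (\<forall>y\<in>W. \<omega> v y = 0)" for v by (simp add: V_def sperp_def)
  have sV: "subspace V" unfolding subspace_def
  proof (intro conjI ballI allI)
    show "0 \<in> V" unfolding V_iff by (simp add: B.zero_left)
    fix x y assume "x \<in> V" "y \<in> V"
    then show "x + y \<in> V" unfolding V_iff by (simp add: B.add_left)
  next
    fix c x assume "x \<in> V"
    then show "c *\<^sub>R x \<in> V" unfolding V_iff by (simp add: B.scaleR_left)
  qed
  have JV: "J x \<in> V" if "x \<in> V" for x using that unfolding V_iff by (simp add: lJ)
  define S where "S = {w + v | w v. w \<in> W \<and> v \<in> V}"
  have WS: "w \<in> S" if "w \<in> W" for w unfolding S_def using that sV subspace_0 by force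
  have VS: "v \<in> S" if "v \<in> V" for v unfolding S_def using that sW subspace_0 by force
  have part1: "W \<inter> V = {0}"
  proof
    show "{0} \<subseteq> W \<inter> V" using sW sV subspace_0 by blast
    show "W \<inter> V \<subseteq> {0}"
    proof
      fix x assume x: "x \<in> W \<inter> V"
      then have "x \<in> W" "\<forall>y\<in>W. \<omega> x y = 0" using V_iff by auto
      then have "\<omega> x x = 0" by blast
      then show "x \<in> {0}" using Ppos[of x] x by (cases "x = 0") auto
    qed
  qed
  have Sc: "csubspace J S"
  proof -
    have "subspace S" unfolding subspace_def
    proof (intro conjI ballI allI)
      show "0 \<in> S" using WS sW subspace_0 by blast
      fix x y assume "x \<in> S" "y \<in> S"
      then obtain w v w' v' where "x = w + v" "y = w' + v'" "w \<in> W" "v \<in> V" "w' \<in> W" "v' \<in> V"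
        unfolding S_def by blast
      then show "x + y \<in> S" unfolding S_def using sW sV
        by (intro CollectI exI[of _ "w + w'"] exI[of _ "v + v'"]) (auto simp: subspace_add algebra_simps)
    next
      fix r x assume "x \<in> S"
      then obtain w v where "x = w + v" "w \<in> W" "v \<in> V" unfolding S_def by blast
      then show "r *\<^sub>R x \<in> S" unfolding S_def using sW sV
        by (intro CollectI exI[of _ "r *\<^sub>R w"] exI[of _ "r *\<^sub>R v"]) (auto simp: subspace_scale scaleR_add_right)
    qed
    moreover have "J x \<in> S" if xS: "x \<in> S" for x
    proof -
      obtain w v where "x = w + v" "w \<in> W" "v \<in> V" using xS unfolding S_def by blast
      then show ?thesis unfolding S_def using JW JV linear_add[OF c(1)]
        by (intro CollectI exI[of _ "J w"] exI[of _ "J v"]) auto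
    qed
    ultimately show ?thesis unfolding csubspace_def by blast
  qed
  have part2: "closure S = UNIV"
  proof (rule ccontr)
    assume "closure S \<noteq> UNIV"
    then obtain z where z: "z \<notin> closure S" by blast
    obtain a where a: "\<forall>m\<in>closure S. \<omega> m a = 0" "\<omega> z a \<noteq> 0"
      using separate[OF cs assms(2) closure_csubspace[OF cs Sc] closed_closure z] by blast
    have a0: "a \<noteq> 0" using a(2) by (auto simp: B.zero_right)
    have aS: "\<omega> m a = 0" if "m \<in> S" for m using a(1) that closure_subset by blast
    have aV: "a \<in> V" unfolding V_iff
    proof
      fix y assume "y \<in> W"
      then have "\<omega> y a = 0" using aS WS by blast
      then show "\<omega> a y = 0" using sk[of y a] by simp
    qed
    have aW: "a \<in> W"
    proof (rule ccontr)
      assume "a \<notin> W"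
      then obtain b where b: "\<forall>m\<in>W. \<omega> m b = 0" "\<omega> a b \<noteq> 0"
        using separate[OF cs assms(2) Wc Wcl] by blast
      have "b \<in> V" unfolding V_iff
      proof
        fix y assume "y \<in> W"
        then have "\<omega> y b = 0" using b by blast
        then show "\<omega> b y = 0" using sk[of y b] by simp
      qed
      then have "\<omega> b a = 0" using aS VS by blast
      then have "\<omega> a b = 0" using sk[of b a] by simp
      then show False using b by blast
    qed
    show False using part1 aV aW a0 by blast
  qed
  have part3: "S \<noteq> UNIV"
  proof
    assume SU: "S = UNIV"
    \<comment> \<open>Step A: the Riesz map has bounded inverse\<close>
    define F where "F = {x. \<forall>y. norm (\<omega> y x) \<le> norm y}"
    define fA where "fA i z = (if i \<in> F then i \<bullet> z else 0)" for i z :: 'a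
    have "\<exists>M. \<forall>i x. norm (fA i x) \<le> M * norm x"
    proof (rule ubp)
      show "bounded_linear (fA i)" for i
      proof (cases "i \<in> F")
        case True
        then have "fA i = (\<lambda>z. i \<bullet> z)" by (intro ext) (simp add: fA_def)
        then show ?thesis by (simp add: bounded_linear_inner_right)
      next
        case False
        then have "fA i = (\<lambda>z. 0)" by (intro ext) (simp add: fA_def)
        then show ?thesis by simp
      qed
      fix z
      obtain a where a: "cip J z = (\<lambda>x. \<omega> x a)" using riesz cip_cdual[OF cs, of z] by blast
      have "norm (fA i z) \<le> norm a" for i
      proof (cases "i \<in> F")
        case True
        have "\<bar>i \<bullet> z\<bar> = \<bar>Re (cip J z i)\<bar>" by (simp add: cip_def inner_commute)
        also have "\<dots> \<le> norm (cip J z i)" by (rule abs_Re_le_cmod)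
        also have "\<dots> = norm (\<omega> a i)" using a sk[of i a] by simp
        also have "\<dots> \<le> norm a" using True unfolding F_def by blast
        finally show ?thesis using True by (simp add: fA_def)
      qed (simp add: fA_def)
      then show "\<exists>B. \<forall>i. norm (fA i z) \<le> B" by blast
    qed
    then obtain M where M: "\<And>i x. norm (fA i x) \<le> M * norm x" by blast
    define K where "K = max M 0"
    have K0: "K \<ge> 0" by (simp add: K_def)
    have FK: "norm x \<le> K" if "x \<in> F" for x
    proof (cases "x = 0")
      case True then show ?thesis using K0 by simp
    next
      case False
      have "norm x * norm x = \<bar>x \<bullet> x\<bar>" by (simp add: norm_eq_sqrt_inner)
      also have "\<dots> = norm (fA x x)" using that by (simp add: fA_def)
      also have "\<dots> \<le> M * norm x" by (rule M)
      finally have "norm x \<le> M" using False by simp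
      then show ?thesis by (simp add: K_def)
    qed
    define U where "U = {u \<in> W. Im (\<omega> u u) \<le> 1}"
    define fB where "fB i x = (if i \<in> U then \<omega> x i else 0)" for i x
    have "\<exists>M. \<forall>i x. norm (fB i x) \<le> M * norm x"
    proof (rule ubp)
      show "bounded_linear (fB i)" for i
      proof (cases "i \<in> U")
        case True
        then have "fB i = (\<lambda>x. \<omega> x i)" by (intro ext) (simp add: fB_def)
        then show ?thesis by (simp add: B.bounded_linear_left)
      next
        case False
        then have "fB i = (\<lambda>x. 0)" by (intro ext) (simp add: fB_def)
        then show ?thesis by simp
      qed
      fix x
      obtain w v where wv: "x = w + v" "w \<in> W" "v \<in> V" using SU unfolding S_def by blast
      have "norm (fB i x) \<le> Im (\<omega> w w) + 1" for i
      proof (cases "i \<in> U")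
        case True
        then have iW: "i \<in> W" and i1: "Im (\<omega> i i) \<le> 1" by (auto simp: U_def)
        have "\<omega> v i = 0" using wv(3) iW unfolding V_iff by blast
        then have "\<omega> x i = \<omega> w i" using wv(1) by (simp add: B.add_left)
        moreover have "norm (\<omega> w i) \<le> Im (\<omega> w w) + Im (\<omega> i i)"
          by (rule cs_bound[OF bb lJ rJ sk P sW JW wv(2) iW])
        ultimately show ?thesis using True i1 by (simp add: fB_def)
      next
        case False then show ?thesis using P[OF wv(2)] by (simp add: fB_def)
      qed
      then show "\<exists>B. \<forall>i. norm (fB i x) \<le> B" by blast
    qed
    then obtain M2 where M2: "\<And>i x. norm (fB i x) \<le> M2 * norm x" by blast
    define M' where "M' = max M2 1"
    have M'1: "M' \<ge> 1" by (simp add: M'_def)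
    define R where "R = K * M' + 1"
    have R0: "R > 0" using K0 M'1 by (simp add: R_def add_nonneg_pos)
    have UR: "norm u \<le> R" if "u \<in> U" for u
    proof -
      have "(1 / M') *\<^sub>R u \<in> F" unfolding F_def
      proof (intro CollectI allI)
        fix y
        have "norm (\<omega> y ((1 / M') *\<^sub>R u)) = norm (\<omega> y u) / M'" using M'1 by (simp add: B.scaleR_right)
        also have "\<dots> \<le> M2 * norm y / M'" using M2[of u y] that M'1 by (simp add: fB_def divide_right_mono)
        also have "\<dots> \<le> M' * norm y / M'" using M'1 by (intro divide_right_mono mult_right_mono) (auto simp: M'_def)
        also have "\<dots> = norm y" using M'1 by simp
        finally show "norm (\<omega> y ((1 / M') *\<^sub>R u)) \<le> norm y" .
      qed
      then have "norm ((1 / M') *\<^sub>R u) \<le> K" by (rule FK)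
      then have "norm u / M' \<le> K" using M'1 by simp
      then have "norm u \<le> K * M'" using M'1 by (simp add: divide_le_eq)
      then show ?thesis by (simp add: R_def)
    qed
    have "\<exists>c>0. \<forall>x\<in>W. Re (- \<i> * \<omega> x x) \<ge> c * (norm x)\<^sup>2"
    proof (intro exI[of _ "1 / R\<^sup>2"] conjI ballI)
      show "1 / R\<^sup>2 > 0" using R0 by simp
      fix x assume xW: "x \<in> W"
      show "1 / R\<^sup>2 * (norm x)\<^sup>2 \<le> Re (- \<i> * \<omega> x x)"
      proof (cases "x = 0")
        case True then show ?thesis by (simp add: B.zero_left)
      next
        case False
        define t where "t = Im (\<omega> x x)"
        have t0: "t > 0" using Ppos[OF xW False] by (simp add: t_def)
        define u where "u = (1 / sqrt t) *\<^sub>R x"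
        have uW: "u \<in> W" using sW xW by (simp add: u_def subspace_scale)
        have "\<omega> u u = (1 / sqrt t) *\<^sub>R ((1 / sqrt t) *\<^sub>R \<omega> x x)"
          by (simp add: u_def B.scaleR_left B.scaleR_right)
        then have "Im (\<omega> u u) = t / (sqrt t)\<^sup>2" by (simp add: t_def power2_eq_square)
        then have "Im (\<omega> u u) = 1" using t0 by simp
        then have "u \<in> U" using uW by (simp add: U_def)
        then have "norm u \<le> R" by (rule UR)
        then have "norm x / sqrt t \<le> R" using t0 by (simp add: u_def)
        then have "norm x \<le> R * sqrt t" using t0 by (simp add: divide_le_eq)
        then have "(norm x)\<^sup>2 \<le> (R * sqrt t)\<^sup>2" by (intro power_mono) auto
        then have "(norm x)\<^sup>2 \<le> R\<^sup>2 * t" using t0 by (simp add: power_mult_distrib)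
        then have "(norm x)\<^sup>2 / R\<^sup>2 \<le> t" using R0 by (simp add: divide_le_eq mult.commute)
        then show ?thesis by (simp add: t_def)
      qed
    qed
    then show False using notc by blast
  qed
  show ?thesis using part1 part2 part3 unfolding S_def V_def by blast
qed

end
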